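(* For a real root $\alpha$ let $\pi_\alpha:=\alpha\,(\alpha|\cdot)\in\mathrm{End}(\mathfrak h^* )$, i.e. $\pi_\alpha(x)=(\alpha|x)\alpha$. Define $X:\Delta^{\mathrm{re}}\to\mathrm{End}(\mathrm{Sym}^2(\mathfrak h^* ))$ by $$X(\alpha):=\pi_\alpha\otimes\pi_\alpha-\big(\pi_\alpha\otimes\mathrm{id}_{\mathfrak h^*}+\mathrm{id}_{\mathfrak h^*}\otimes\pi_\alpha\big)+\tfrac12\,\mathrm{id}_{\mathfrak h^*}\otimes\mathrm{id}_{\mathfrak h^*}$$ (restricted to the subspace $\mathrm{Sym}^2(\mathfrak h^* )\subseteq\mathfrak h^*\otimes\mathfrak h^*$ of symmetric tensors, which it preserves). Then for all real roots $\alpha,\beta$: $X(\alpha)X(\beta)-X(\beta)X(\alpha)=0$ if $(\alpha|\beta)=0$, and $X(\alpha)X(\beta)+X(\beta)X(\alpha)=X(\alpha\pm\beta)$ if $(\alpha|\beta)=\mp1$. Consequently the assignment $X_i\mapsto X(\alpha_i)\otimes\Gamma(\alpha_i)\in\mathrm{End}(\mathrm{Sym}^2(\mathfrak h^* )\otimes S)$ extends to a representation $\sigma$ of $\mathfrak k$.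
   Context: Let $A=(a_{ij})_{1\le i,j\le n}$ be a symmetrizable simply laced generalized Cartan matrix (off-diagonal entries $0$ or $-1$); the Dynkin diagram has an edge between $i\ne j$ iff $a_{ij}=-1$. Let $\mathfrak g$ be the split real Kac–Moody algebra of $A$ with Chevalley generators $e_i,f_i$, Cartan subalgebra $\mathfrak h$ (from a real realization), simple roots $\alpha_1,\dots,\alpha_n\in\mathfrak h^*$, set of real roots $\Delta^{\mathrm{re}}$, and let $(\cdot|\cdot)$ be the nondegenerate invariant symmetric bilinear form induced on $\mathfrak h^*$, with $(\alpha_i|\alpha_j)=a_{ij}$ (so $(\alpha|\alpha)=2$ for real roots). Let $\mathfrak k$ be the fixed-point subalgebra of the Chevalley involution ($e_i\mapsto -f_i$, $f_i\mapsto-e_i$, $h\mapsto -h$), with Berman generators $X_i=e_i-f_i$; $\mathfrak k$ is presented by generators $X_1,\dots,X_n$ and relations $[X_i,[X_i,X_j]]=-X_j$ if $a_{ij}=-1$, $[X_i,X_j]=0$ if $a_{ij}=0$. A generalized spin representation is a representation $\rho$ of $\mathfrak k$ with $\rho(X_i)^2=-\frac14\mathrm{id}$. Fix a finite-dimensional real vector space $S$ with positive definite inner product and orthonormal basis, and a generalized spin representation $\rho:\mathfrak k\to\mathrm{End}(S)$ whose values $\rho(X_i)$ are anti-symmetric real matrices in this basis (such exist, e.g. by realifying the generalized spin representations with compact image of Hainke–Köhl–Levy); put $\Gamma(\alpha_i):=2\rho(X_i)$. *)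

theory Defs
  imports "HOL-Analysis.Analysis"
begin

text \<open>Index type 'i of the simple roots (n = CARD('i)); 'd indexes a basis of h^*,
  so h^* = real^'d; S = real^'s with its standard orthonormal basis.\<close>

definition simply_laced_GCM :: "('i \<Rightarrow> 'i \<Rightarrow> int) \<Rightarrow> bool" where
  "simply_laced_GCM A \<longleftrightarrow> (\<forall>i. A i i = 2) \<and>
     (\<forall>i j. i \<noteq> j \<longrightarrow> A i j = 0 \<or> A i j = -1) \<and>
     (\<forall>i j. A i j = 0 \<longleftrightarrow> A j i = 0)"

definition symmetrizable :: "('i \<Rightarrow> 'i \<Rightarrow> int) \<Rightarrow> bool" where
  "symmetrizable A \<longleftrightarrow> (\<exists>d::'i \<Rightarrow> real. (\<forall>i. d i > 0) \<and>
     (\<forall>i j. d i * real_of_int (A i j) = d j * real_of_int (A j i)))"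

definition cartan_matrix :: "('i::finite \<Rightarrow> 'i \<Rightarrow> int) \<Rightarrow> real^'i^'i" where
  "cartan_matrix A = (\<chi> i j. real_of_int (A i j))"

text \<open>Real roots: the Weyl group orbit of the simple roots, where the simple reflection
  is s_i(x) = x - (alpha_i|x) alpha_i (simply laced, (alpha_i|alpha_i) = 2).\<close>
inductive_set real_roots :: "('v \<Rightarrow> 'v \<Rightarrow> real) \<Rightarrow> ('i \<Rightarrow> 'v::real_vector) \<Rightarrow> 'v set"
  for B :: "'v \<Rightarrow> 'v \<Rightarrow> real" and \<alpha> :: "'i \<Rightarrow> 'v" where
  simple: "\<alpha> i \<in> real_roots B \<alpha>"
| refl: "\<beta> \<in> real_roots B \<alpha> \<Longrightarrow> \<beta> - B (\<alpha> i) \<beta> *\<^sub>R \<alpha> i \<in> real_roots B \<alpha>"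

definition pi_op :: "('v \<Rightarrow> 'v \<Rightarrow> real) \<Rightarrow> 'v \<Rightarrow> 'v \<Rightarrow> 'v::real_vector" where
  "pi_op B a = (\<lambda>x. B a x *\<^sub>R a)"

text \<open>h^* \<otimes> h^* is identified with real^'d^'d (M$i$j = coefficient of e_i \<otimes> e_j);
  f \<otimes> g acts by M \<mapsto> F M G^T. Sym^2(h^*) = symmetric matrices.\<close>
definition tensor_op :: "(real^'d \<Rightarrow> real^'d) \<Rightarrow> (real^'d \<Rightarrow> real^'d) \<Rightarrow> real^'d^'d \<Rightarrow> real^'d^'d" where
  "tensor_op f g = (\<lambda>M. matrix f ** M ** transpose (matrix g))"

definition Sym2 :: "(real^'d^'d) set" where
  "Sym2 = {M. transpose M = M}"

definition Xop :: "(real^'d \<Rightarrow> real^'d \<Rightarrow> real) \<Rightarrow> real^'d \<Rightarrow> real^'d^'d \<Rightarrow> real^'d^'d" where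
  "Xop B a = (\<lambda>M. tensor_op (pi_op B a) (pi_op B a) M
      - (tensor_op (pi_op B a) id M + tensor_op id (pi_op B a) M)
      + (1/2) *\<^sub>R tensor_op id id M)"

text \<open>(h^* \<otimes> h^*) \<otimes> S is identified with (real^'d^'d)^'s (w$k = coefficient of e_k in S);
  f \<otimes> G acts by (f \<otimes> G)(w)$l = \<Sum>_k G$l$k f(w$k).\<close>
definition tensor_S :: "(real^'d^'d \<Rightarrow> real^'d^'d) \<Rightarrow> real^'s^'s \<Rightarrow> (real^'d^'d)^'s \<Rightarrow> (real^'d^'d)^'s" where
  "tensor_S f G = (\<lambda>w. \<chi> l. \<Sum>k\<in>UNIV. (G$l$k) *\<^sub>R f (w$k))"

definition Sym2_S :: "((real^'d^'d)^'s) set" where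
  "Sym2_S = {w. \<forall>k. w$k \<in> Sym2}"

text \<open>Since k is presented by these generators and relations,
  this is exactly a representation of k on U (X_i acting as f i).\<close>
definition comm :: "('w \<Rightarrow> 'w::real_vector) \<Rightarrow> ('w \<Rightarrow> 'w) \<Rightarrow> 'w \<Rightarrow> 'w" where
  "comm f g = (\<lambda>w. f (g w) - g (f w))"

definition k_rep_on :: "('i \<Rightarrow> 'i \<Rightarrow> int) \<Rightarrow> 'w set \<Rightarrow> ('i \<Rightarrow> 'w \<Rightarrow> 'w::real_vector) \<Rightarrow> bool" where
  "k_rep_on A U f \<longleftrightarrow> subspace U \<and> (\<forall>i. linear (f i)) \<and> (\<forall>i. f i ` U \<subseteq> U) \<and>
     (\<forall>i j. A i j = -1 \<longrightarrow> (\<forall>w\<in>U. comm (f i) (comm (f i) (f j)) w = - f j w)) \<and>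
     (\<forall>i j. A i j = 0 \<longrightarrow> (\<forall>w\<in>U. comm (f i) (f j) w = 0))"

definition gen_spin_rep :: "('i \<Rightarrow> 'i \<Rightarrow> int) \<Rightarrow> ('i \<Rightarrow> real^'s^'s) \<Rightarrow> bool" where
  "gen_spin_rep A R \<longleftrightarrow> k_rep_on A UNIV (\<lambda>i x. R i *v x) \<and>
     (\<forall>i. R i ** R i = (- 1/4) *\<^sub>R mat 1)"

end

theory Submission
  imports Defs
begin

definition uvec :: "(real^'d \<Rightarrow> real^'d \<Rightarrow> real) \<Rightarrow> real^'d \<Rightarrow> real^'d" where
  "uvec B a = (\<chi> j. B a (axis j 1))"

lemma mat_pi: "matrix (pi_op B a) = (\<chi> i j. a$i * uvec B a $ j)"
  by (simp add: matrix_def pi_op_def uvec_def vec_eq_iff mult.commute)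

lemma transpose_outer_mv: "(z::real^'d) v* (\<chi> i j. a$i * v$j) = (a \<bullet> z) *\<^sub>R v"
  by (simp add: vector_matrix_mult_def inner_vec_def vec_eq_iff sum_distrib_left sum_distrib_right mult_ac)

lemma form_tensor: "x \<bullet> (tensor_op f g M *v y) =
   (transpose (matrix f) *v x) \<bullet> (M *v (transpose (matrix g) *v y))"
  unfolding tensor_op_def
  by (simp add: matrix_vector_mul_assoc[symmetric] dot_lmul_matrix[symmetric])

lemma form_Xop: "x \<bullet> (Xop B a M *v y) =
   (a \<bullet> x) * (a \<bullet> y) * (uvec B a \<bullet> (M *v uvec B a))
   - (a \<bullet> x) * (uvec B a \<bullet> (M *v y)) - (a \<bullet> y) * (x \<bullet> (M *v uvec B a))
   + (1/2) * (x \<bullet> (M *v y))"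
  unfolding Xop_def
  by (simp add: algebra_simps inner_diff_right inner_add_right form_tensor mat_pi
       transpose_outer_mv matrix_id_mat_1 scaleR_matrix_vector_assoc[symmetric])

lemma uvec_inner: "bilinear B \<Longrightarrow> uvec B a \<bullet> z = B a z"
proof -
  assume b: "bilinear B"
  then have l: "linear (B a)" by (simp add: bilinear_def)
  have "B a z = B a (\<Sum>j\<in>UNIV. z$j *\<^sub>R axis j 1)"
    using basis_expansion[of z] by (simp add: scalar_mult_eq_scaleR)
  also have "\<dots> = (\<Sum>j\<in>UNIV. z$j * B a (axis j 1))"
    using l by (simp add: linear_sum linear_scale)
  finally show ?thesis by (simp add: uvec_def inner_vec_def mult.commute)
qed

lemma inner_uvec: "bilinear B \<Longrightarrow> z \<bullet> uvec B a = B a z"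
  by (metis inner_commute uvec_inner)

lemma uvec_add: "bilinear B \<Longrightarrow> uvec B (a + b) = uvec B a + uvec B b"
  unfolding uvec_def by (simp add: vec_eq_iff bilinear_ladd)

lemma uvec_neg: "bilinear B \<Longrightarrow> uvec B (- a) = - uvec B a"
  unfolding uvec_def by (simp add: vec_eq_iff bilinear_lneg)

lemma form_eq: "(\<And>x y. x \<bullet> (M *v y) = x \<bullet> ((N::real^'d^'d) *v y)) \<Longrightarrow> M = N"
proof -
  assume h: "\<And>x y. x \<bullet> (M *v y) = x \<bullet> ((N::real^'d^'d) *v y)"
  have "M *v y = N *v y" for y
  proof -
    have "(M *v y - N *v y) \<bullet> (M *v y - N *v y) = 0"
      using h[of "M *v y - N *v y" y] by (simp add: inner_diff_right inner_diff_left)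
    then show ?thesis by simp
  qed
  then show ?thesis by (simp add: matrix_eq)
qed

lemma form_sym: "M \<in> Sym2 \<Longrightarrow> x \<bullet> (M *v y) = y \<bullet> (M *v (x::real^'d))"
proof -
  assume "M \<in> Sym2"
  then have t: "transpose M = M" by (simp add: Sym2_def)
  have "x \<bullet> (M *v y) = (x v* M) \<bullet> y" by (simp add: dot_lmul_matrix)
  also have "\<dots> = (transpose M *v x) \<bullet> y" by simp
  finally show ?thesis using t by (simp add: inner_commute)
qed

lemma anticomm:
  fixes B :: "real^'d \<Rightarrow> real^'d \<Rightarrow> real"
  assumes bil: "bilinear B" and ab: "B a b = -1" and ba: "B b a = -1" and M: "M \<in> Sym2"
  shows "Xop B a (Xop B b M) + Xop B b (Xop B a M) = Xop B (a + b) M"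
proof (rule form_eq)
  fix x y :: "real^'d"
  have s: "uvec B b \<bullet> (M *v uvec B a) = uvec B a \<bullet> (M *v uvec B b)"
    using form_sym[OF M] by blast
  show "x \<bullet> ((Xop B a (Xop B b M) + Xop B b (Xop B a M)) *v y) = x \<bullet> (Xop B (a + b) M *v y)"
    apply (simp add: form_Xop inner_add_right matrix_vector_mult_add_rdistrib inner_uvec[OF bil]
       uvec_add[OF bil] inner_add_left matrix_vector_right_distrib ab ba s)
    apply (simp add: field_simps)
    done
qed

lemma comm0:
  fixes B :: "real^'d \<Rightarrow> real^'d \<Rightarrow> real"
  assumes bil: "bilinear B" and ab: "B a b = 0" and ba: "B b a = 0" and M: "M \<in> Sym2"
  shows "Xop B a (Xop B b M) = Xop B b (Xop B a M)"
proof (rule form_eq)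
  fix x y :: "real^'d"
  have s: "uvec B b \<bullet> (M *v uvec B a) = uvec B a \<bullet> (M *v uvec B b)"
    using form_sym[OF M] by blast
  show "x \<bullet> (Xop B a (Xop B b M) *v y) = x \<bullet> (Xop B b (Xop B a M) *v y)"
    apply (simp add: form_Xop inner_uvec[OF bil] ab ba s)
    apply (simp add: field_simps)
    done
qed

lemma Sym2I: "(\<And>x y. x \<bullet> (N *v y) = y \<bullet> (N *v (x::real^'d))) \<Longrightarrow> N \<in> Sym2"
proof -
  assume h: "\<And>x y. x \<bullet> (N *v y) = y \<bullet> (N *v (x::real^'d))"
  have "transpose N = N"
  proof (rule form_eq)
    fix x y :: "real^'d"
    have "x \<bullet> (transpose N *v y) = (y v* N) \<bullet> x" by (simp add: inner_commute)
    also have "\<dots> = y \<bullet> (N *v x)" by (simp add: dot_lmul_matrix)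
    finally show "x \<bullet> (transpose N *v y) = x \<bullet> (N *v y)" using h by simp
  qed
  then show ?thesis by (simp add: Sym2_def)
qed

lemma Xop_Sym2: fixes B :: "real^'d \<Rightarrow> real^'d \<Rightarrow> real" shows "M \<in> Sym2 \<Longrightarrow> Xop B a M \<in> Sym2"
proof (rule Sym2I)
  fix x y :: "real^'d"
  assume M: "M \<in> Sym2"
  show "x \<bullet> (Xop B a M *v y) = y \<bullet> (Xop B a M *v x)"
    using form_sym[OF M, of x y] form_sym[OF M, of x "uvec B a"] form_sym[OF M, of y "uvec B a"]
    by (simp add: form_Xop)
qed

lemma Xop_linear: fixes B :: "real^'d \<Rightarrow> real^'d \<Rightarrow> real" shows "linear (Xop B a)"
proof (rule linearI)
  fix M N :: "real^'d^'d" and c :: real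
  show "Xop B a (M + N) = Xop B a M + Xop B a N"
    by (rule form_eq) (simp add: form_Xop inner_add_right matrix_vector_mult_add_rdistrib algebra_simps)
  show "Xop B a (c *\<^sub>R M) = c *\<^sub>R Xop B a M"
    by (rule form_eq) (simp add: form_Xop scaleR_matrix_vector_assoc[symmetric] algebra_simps)
qed

lemma pi_op_neg: "bilinear B \<Longrightarrow> pi_op B (- a) = pi_op B a"
  by (simp add: pi_op_def fun_eq_iff bilinear_lneg)

lemma Xop_neg: "bilinear B \<Longrightarrow> Xop B (- a) = Xop B a"
  by (simp add: Xop_def pi_op_neg)

lemma ts_comp:
  assumes "linear f"
  shows "tensor_S f G (tensor_S g H w) = tensor_S (\<lambda>M. f (g M)) (G ** H) w"
proof -
  have "(\<Sum>k\<in>UNIV. G$l$k *\<^sub>R f (\<Sum>m\<in>UNIV. H$k$m *\<^sub>R g (w$m)))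
          = (\<Sum>m\<in>UNIV. (\<Sum>k\<in>UNIV. G$l$k * H$k$m) *\<^sub>R f (g (w$m)))" for l
  proof -
    have "(\<Sum>k\<in>UNIV. G$l$k *\<^sub>R f (\<Sum>m\<in>UNIV. H$k$m *\<^sub>R g (w$m)))
        = (\<Sum>k\<in>UNIV. \<Sum>m\<in>UNIV. (G$l$k * H$k$m) *\<^sub>R f (g (w$m)))"
      using assms by (simp add: linear_sum linear_scale scaleR_sum_right)
    also have "\<dots> = (\<Sum>m\<in>UNIV. \<Sum>k\<in>UNIV. (G$l$k * H$k$m) *\<^sub>R f (g (w$m)))"
      by (rule sum.swap)
    also have "\<dots> = (\<Sum>m\<in>UNIV. (\<Sum>k\<in>UNIV. G$l$k * H$k$m) *\<^sub>R f (g (w$m)))"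
      by (simp add: scaleR_sum_left)
    finally show ?thesis .
  qed
  then show ?thesis by (simp add: tensor_S_def matrix_matrix_mult_def)
qed

lemma ts_cong: "(\<And>k. f (w$k) = g (w$k)) \<Longrightarrow> tensor_S f G w = tensor_S g G w"
  by (simp add: tensor_S_def)

lemma ts_add: "tensor_S f G w + tensor_S g G w = tensor_S (\<lambda>M. f M + g M) G w"
  by (simp add: tensor_S_def vec_eq_iff scaleR_add_right sum.distrib)

lemma ts_negG: "tensor_S f (- G) w = - tensor_S f G w"
  by (simp add: tensor_S_def vec_eq_iff sum_negf)

lemma ts_linear: "linear f \<Longrightarrow> linear (tensor_S f G)"
  apply (rule linearI)
   apply (simp add: tensor_S_def vec_eq_iff linear_add scaleR_add_right sum.distrib)
  apply (simp add: tensor_S_def vec_eq_iff linear_scale scaleR_sum_right mult_ac)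
  done

lemma subspace_Sym2: "subspace (Sym2 :: (real^'d^'d) set)"
  unfolding subspace_def Sym2_def
  by (simp add: transpose_scalar vec_eq_iff transpose_def)

lemma subspace_Sym2_S: "subspace (Sym2_S :: ((real^'d^'d)^'s) set)"
  using subspace_Sym2[where 'd='d]
  unfolding subspace_def Sym2_S_def by simp

lemma ts_Sym: "(\<And>M. M \<in> Sym2 \<Longrightarrow> f M \<in> (Sym2::(real^'d^'d) set)) \<Longrightarrow> w \<in> Sym2_S
   \<Longrightarrow> tensor_S f G w \<in> Sym2_S"
  unfolding Sym2_S_def tensor_S_def
  by (auto intro!: subspace_sum[OF subspace_Sym2] subspace_scale[OF subspace_Sym2])

lemma mat_neg_r: "(A::real^'n^'n) ** (- C) = - (A ** C)"
  by (simp add: matrix_matrix_mult_def vec_eq_iff sum_negf)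

lemma mat_neg_l: "(- A::real^'n^'n) ** C = - (A ** C)"
  by (simp add: matrix_matrix_mult_def vec_eq_iff sum_negf)

lemma mat_sc: "((a::real) *\<^sub>R (A::real^'n^'n)) ** (b *\<^sub>R C) = (a*b) *\<^sub>R (A ** C)"
  by (simp add: matrix_matrix_mult_def vec_eq_iff sum_distrib_left mult_ac)

lemma neg_mv: "(- A::real^'n^'m) *v x = - (A *v x)"
  by (simp add: matrix_vector_mult_def vec_eq_iff sum_negf)

lemma mv_neg: "(A::real^'n^'m) *v (- x) = - (A *v x)"
  by (simp add: matrix_vector_mult_def vec_eq_iff sum_negf)

lemma spin_sq: "gen_spin_rep A R \<Longrightarrow> R i *v (R i *v y) = (-1/4) *\<^sub>R y"
  unfolding gen_spin_rep_def
  by (simp add: matrix_vector_mul_assoc scaleR_matrix_vector_assoc[symmetric] neg_mv)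

lemma spin_comm0:
  assumes "gen_spin_rep A R" "A i j = 0"
  shows "R i ** R j = R j ** R i"
proof -
  have "\<forall>w. comm (\<lambda>x. R i *v x) (\<lambda>x. R j *v x) w = 0"
    using assms unfolding gen_spin_rep_def k_rep_on_def by blast
  then show ?thesis
    by (simp add: comm_def matrix_eq matrix_vector_mul_assoc[symmetric])
qed

lemma spin_anti:
  assumes sp: "gen_spin_rep A R" and a: "A i j = -1"
  shows "R i ** R j = - (R j ** R i)"
proof -
  have rel: "\<forall>w. comm (\<lambda>x. R i *v x) (comm (\<lambda>x. R i *v x) (\<lambda>x. R j *v x)) w = - (R j *v w)"
    using assms unfolding gen_spin_rep_def k_rep_on_def by blast
  have w: "R i *v (R j *v (R i *v x)) = (1/4) *\<^sub>R (R j *v x)" for x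
  proof -
    have "R i *v (R i *v (R j *v x) - R j *v (R i *v x)) - (R i *v (R j *v (R i *v x)) - R j *v (R i *v (R i *v x))) = - (R j *v x)"
      using rel by (simp add: comm_def)
    then have "(-1/4) *\<^sub>R (R j *v x) - R i *v (R j *v (R i *v x)) - (R i *v (R j *v (R i *v x)) - (-1/4) *\<^sub>R (R j *v x)) = - (R j *v x)"
      by (simp add: matrix_vector_mult_diff_distrib spin_sq[OF sp] matrix_vector_mult_scaleR mv_neg)
    then show ?thesis
      apply (simp add: vec_eq_iff)
      apply (rule allI)
      apply (drule_tac x=ia in spec)
      apply linarith
      done
  qed
  have "R i *v (R j *v y) = - (R j *v (R i *v y))" for y
  proof -
    have "R i *v (R j *v (R i *v (R i *v y))) = (1/4) *\<^sub>R (R j *v (R i *v y))" by (rule w)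
    then have "(-1/4) *\<^sub>R (R i *v (R j *v y)) = (1/4) *\<^sub>R (R j *v (R i *v y))"
      by (simp add: spin_sq[OF sp] matrix_vector_mult_scaleR mv_neg)
    then show ?thesis by (simp add: vec_eq_iff) (metis minus_minus)
  qed
  then show ?thesis
    by (simp add: matrix_eq matrix_vector_mul_assoc[symmetric] neg_mv)
qed

theorem proposition6p5:
  fixes A :: "'i::finite \<Rightarrow> 'i \<Rightarrow> int"
    and B :: "real^'d \<Rightarrow> real^'d \<Rightarrow> real"
    and \<alpha> :: "'i \<Rightarrow> real^'d"
    and R :: "'i \<Rightarrow> real^'s^'s"
  assumes GCM: "simply_laced_GCM A" and symm: "symmetrizable A"
    and dim_h: "CARD('d) = 2 * CARD('i) - rank (cartan_matrix A)"
    and indep: "independent (range \<alpha>)" and inj: "inj \<alpha>"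
    and bil: "bilinear B" and Bsym: "\<forall>x y. B x y = B y x"
    and nondeg: "\<forall>x. (\<forall>y. B x y = 0) \<longrightarrow> x = 0"
    and Bsimple: "\<forall>i j. B (\<alpha> i) (\<alpha> j) = real_of_int (A i j)"
    and spin: "gen_spin_rep A R"
    and antisym: "\<forall>i. transpose (R i) = - R i"
  shows "(\<forall>a\<in>real_roots B \<alpha>. \<forall>M\<in>Sym2. Xop B a M \<in> Sym2)
       \<and> (\<forall>a\<in>real_roots B \<alpha>. \<forall>b\<in>real_roots B \<alpha>. B a b = 0 \<longrightarrow>
            (\<forall>M\<in>Sym2. Xop B a (Xop B b M) - Xop B b (Xop B a M) = 0))
       \<and> (\<forall>a\<in>real_roots B \<alpha>. \<forall>b\<in>real_roots B \<alpha>. B a b = -1 \<longrightarrow>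
            (\<forall>M\<in>Sym2. Xop B a (Xop B b M) + Xop B b (Xop B a M) = Xop B (a + b) M))
       \<and> (\<forall>a\<in>real_roots B \<alpha>. \<forall>b\<in>real_roots B \<alpha>. B a b = 1 \<longrightarrow>
            (\<forall>M\<in>Sym2. Xop B a (Xop B b M) + Xop B b (Xop B a M) = Xop B (a - b) M))
       \<and> k_rep_on A Sym2_S (\<lambda>i. tensor_S (Xop B (\<alpha> i)) (2 *\<^sub>R R i))"
proof -
  have Bs: "\<And>x y. B x y = B y x" using Bsym by blast
  have Bii: "\<And>i. B (\<alpha> i) (\<alpha> i) = 2" using GCM Bsimple by (simp add: simply_laced_GCM_def)
  have c1: "\<forall>a\<in>real_roots B \<alpha>. \<forall>M\<in>Sym2. Xop B a M \<in> Sym2" using Xop_Sym2 by blast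
  have c2: "\<forall>a\<in>real_roots B \<alpha>. \<forall>b\<in>real_roots B \<alpha>. B a b = 0 \<longrightarrow>
            (\<forall>M\<in>Sym2. Xop B a (Xop B b M) - Xop B b (Xop B a M) = 0)"
    using comm0[OF bil] Bs by simp
  have anti: "\<And>a b M. B a b = -1 \<Longrightarrow> M \<in> Sym2 \<Longrightarrow>
      Xop B a (Xop B b M) + Xop B b (Xop B a M) = Xop B (a + b) M"
    using anticomm[OF bil] Bs by metis
  have anti': "\<And>a b M. B a b = 1 \<Longrightarrow> M \<in> Sym2 \<Longrightarrow>
      Xop B a (Xop B b M) + Xop B b (Xop B a M) = Xop B (a - b) M"
  proof -
    fix a b :: "real^'d" and M :: "real^'d^'d" assume ab: "B a b = 1" and M: "M \<in> Sym2"
    have nb: "B a (- b) = -1" using ab by (simp add: bilinear_rneg[OF bil])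
    show "Xop B a (Xop B b M) + Xop B b (Xop B a M) = Xop B (a - b) M"
      using anti[of a "- b" M] nb M by (simp add: Xop_neg[OF bil])
  qed
  define X where "X i = Xop B (\<alpha> i)" for i
  define G where "G i = 2 *\<^sub>R R i" for i
  define f where "f i = tensor_S (X i) (G i)" for i
  have GG: "G i ** G j = 4 *\<^sub>R (R i ** R j)" for i j
    by (simp add: G_def mat_sc)
  have Gsq: "G i ** G i = - mat 1" for i
    using spin by (simp add: GG gen_spin_rep_def)
  have comp: "f i (f j w) = tensor_S (\<lambda>M. X i (X j M)) (G i ** G j) w" for i j w
    unfolding f_def X_def by (rule ts_comp[OF Xop_linear])
  have wk: "\<And>w k. w \<in> Sym2_S \<Longrightarrow> w$k \<in> Sym2" by (simp add: Sym2_S_def)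
  have fU: "f i w \<in> Sym2_S" if "w \<in> Sym2_S" for i w
    unfolding f_def X_def using that by (intro ts_Sym Xop_Sym2)
  have c5: "k_rep_on A Sym2_S f"
    unfolding k_rep_on_def
  proof (intro conjI allI impI ballI)
    show "subspace Sym2_S" by (rule subspace_Sym2_S)
    show "linear (f i)" for i unfolding f_def X_def by (intro ts_linear Xop_linear)
    show "f i ` Sym2_S \<subseteq> Sym2_S" for i using fU by blast
  next
    fix i j and w :: "(real^'d^'d)^'s" assume a: "A i j = 0" and w: "w \<in> Sym2_S"
    have aji: "A j i = 0" using GCM a by (simp add: simply_laced_GCM_def)
    have "G i ** G j = G j ** G i" using spin_comm0[OF spin a] by (simp add: GG)
    moreover have "tensor_S (\<lambda>M. X i (X j M)) H w = tensor_S (\<lambda>M. X j (X i M)) H w" for H :: "real^'s^'s"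
      by (rule ts_cong) (simp add: X_def comm0[OF bil] Bsimple a aji wk[OF w])
    ultimately show "comm (f i) (f j) w = 0"
      by (simp add: comm_def comp)
  next
    fix i j and w :: "(real^'d^'d)^'s" assume a: "A i j = -1" and w: "w \<in> Sym2_S"
    have ij: "i \<noteq> j" using a GCM by (auto simp: simply_laced_GCM_def)
    have aji: "A j i = -1" using GCM a ij unfolding simply_laced_GCM_def by (metis zero_neq_neg_one)
    have Bij: "B (\<alpha> i) (\<alpha> j) = -1" using Bsimple a by simp
    have Bji: "B (\<alpha> j) (\<alpha> i) = -1" using Bsimple aji by simp
    define H where "H = G i ** G j"
    define c where "c = \<alpha> i + \<alpha> j"
    have Gji: "G j ** G i = - H"
      unfolding H_def using spin_anti[OF spin a] by (simp add: GG)
    have h: "comm (f i) (f j) v = tensor_S (Xop B c) H v" if v: "v \<in> Sym2_S" for v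
    proof -
      have "comm (f i) (f j) v = tensor_S (\<lambda>M. X i (X j M)) H v + tensor_S (\<lambda>M. X j (X i M)) H v"
        by (simp add: comm_def comp Gji ts_negG H_def)
      also have "\<dots> = tensor_S (\<lambda>M. X i (X j M) + X j (X i M)) H v" by (rule ts_add)
      also have "\<dots> = tensor_S (Xop B c) H v"
        by (rule ts_cong) (simp add: X_def c_def anti[OF Bij] wk[OF v])
      finally show ?thesis .
    qed
    have GH: "G i ** H = - G j"
      unfolding H_def by (simp add: matrix_mul_assoc Gsq mat_neg_l)
    have HG: "H ** G i = G j"
      unfolding H_def by (simp add: matrix_mul_assoc[symmetric] Gji[unfolded H_def] mat_neg_r)
        (simp add: matrix_mul_assoc Gsq mat_neg_l)
    have Bc: "B (\<alpha> i) (- c) = -1"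
    proof -
      have "B (\<alpha> i) c = B (\<alpha> i) (\<alpha> i) + B (\<alpha> i) (\<alpha> j)"
        unfolding c_def by (rule bilinear_radd[OF bil])
      then have "B (\<alpha> i) c = 1" using Bii Bij by simp
      then show ?thesis by (simp add: bilinear_rneg[OF bil])
    qed
    have "comm (f i) (comm (f i) (f j)) w = f i (tensor_S (Xop B c) H w) - tensor_S (Xop B c) H (f i w)"
      unfolding comm_def[of "f i" "comm (f i) (f j)"] using h[OF w] h[OF fU[OF w]] by simp
    also have "\<dots> = tensor_S (\<lambda>M. X i (Xop B c M)) (G i ** H) w - tensor_S (\<lambda>M. Xop B c (X i M)) (H ** G i) w"
      unfolding f_def X_def by (simp add: ts_comp[OF Xop_linear])
    also have "\<dots> = - (tensor_S (\<lambda>M. X i (Xop B c M)) (G j) w + tensor_S (\<lambda>M. Xop B c (X i M)) (G j) w)"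
      by (simp add: GH HG ts_negG)
    also have "\<dots> = - tensor_S (\<lambda>M. X i (Xop B c M) + Xop B c (X i M)) (G j) w"
      by (simp add: ts_add)
    also have "\<dots> = - tensor_S (X j) (G j) w"
    proof -
      have "tensor_S (\<lambda>M. X i (Xop B c M) + Xop B c (X i M)) (G j) w = tensor_S (X j) (G j) w"
      proof (rule ts_cong)
        fix k
        have "X i (Xop B c (w$k)) + Xop B c (X i (w$k)) = Xop B (\<alpha> i + - c) (w$k)"
          using anti[OF Bc wk[OF w]] by (simp add: X_def Xop_neg[OF bil])
        also have "\<alpha> i + - c = - \<alpha> j" by (simp add: c_def)
        finally show "X i (Xop B c (w$k)) + Xop B c (X i (w$k)) = X j (w$k)"
          by (simp add: X_def Xop_neg[OF bil])
      qed
      then show ?thesis by simp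
    qed
    finally show "comm (f i) (comm (f i) (f j)) w = - f j w" by (simp add: f_def)
  qed
  show ?thesis
    using c1 c2 anti anti' c5 unfolding f_def X_def G_def by blast
qed

end
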